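(* Consider strings $P$ and $S$ such that $|S|\le |Q_k|+4\tau$ and $P$ contains $Q_k$ as a substring. Then $P$ occurs in $S$ at position $p$ if and only if $r_k(P)$ occurs in $r_k(S)$ at position $p$.
   Context: For a string $S$, $S[1..p]$ is a period of $S$ if $S[i]=S[i+p]$ for $1\le i\le |S|-p$, and $\mathrm{per}(S)$ denotes the length of the shortest period of $S$. Let $\tau\ge1$ and $\ell>10\tau$ be integers, $S_k$ a string of length at least $\ell$, and $Q_k = S_k[1+2\tau..\ell]$, so $|Q_k|=\ell-2\tau\ge 8\tau$. Let $\rho=Q_k[1..\mathrm{per}(Q_k)]$. If $\mathrm{per}(Q_k) > 4\tau$, define $Q_k' = \#$, where $\#$ is a special letter not in the main alphabet. Otherwise write $Q_k=\rho^t\rho'$ with $\rho'$ a prefix of $\rho$, and set $Q_k'=\rho^{t'}\rho'$ for some $t'\le t$ chosen so that $8\tau\le |Q_k'|<12\tau$. For any string $S$, define $r_k(S)=\varepsilon$ (the empty string) if $S$ does not contain $Q_k$, and otherwise $r_k(S)$ is the string obtained from $S$ by replacing the first occurrence of $Q_k$ with $Q'_k$. *)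

theory Defs
  imports Main
begin

text \<open>Strings are lists, positions are 0-based (the paper's position p corresponds
to index p-1; the statement is invariant under this shift).  The extended alphabet
with the special letter # is \<open>'a option\<close>, with \<open>None\<close> playing the role of #.\<close>

definition is_period :: "'a list \<Rightarrow> nat \<Rightarrow> bool" where
  "is_period S q \<longleftrightarrow> 0 < q \<and> q \<le> length S \<and> (\<forall>i. i + q < length S \<longrightarrow> S ! i = S ! (i + q))"

definition per :: "'a list \<Rightarrow> nat" where
  "per S = (LEAST q. is_period S q)"

definition occ_at :: "'a list \<Rightarrow> 'a list \<Rightarrow> nat \<Rightarrow> bool" where
  "occ_at P S p \<longleftrightarrow> p + length P \<le> length S \<and> take (length P) (drop p S) = P"

definition contains :: "'a list \<Rightarrow> 'a list \<Rightarrow> bool" where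
  "contains S Q \<longleftrightarrow> (\<exists>p. occ_at Q S p)"

text \<open>Q_k = S_k[1+2tau..l]\<close>
definition Qk :: "'a list \<Rightarrow> nat \<Rightarrow> nat \<Rightarrow> 'a list" where
  "Qk Sk tau l = take (l - 2 * tau) (drop (2 * tau) Sk)"

definition rho :: "'a list \<Rightarrow> 'a list" where
  "rho Q = take (per Q) Q"

text \<open>Q = rho^t rho' with t = |Q| div per Q and rho' = rho[1..|Q| mod per Q];
  Q' = rho^t' rho' (or # if per Q > 4 tau).\<close>
definition Qk' :: "'a list \<Rightarrow> nat \<Rightarrow> nat \<Rightarrow> 'a option list" where
  "Qk' Q tau t' = (if per Q > 4 * tau then [None]
      else map Some (concat (replicate t' (rho Q)) @ take (length Q mod per Q) (rho Q)))"

definition valid_t' :: "'a list \<Rightarrow> nat \<Rightarrow> nat \<Rightarrow> bool" where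
  "valid_t' Q tau t' \<longleftrightarrow> per Q > 4 * tau \<or>
     (t' \<le> length Q div per Q \<and> 8 * tau \<le> length (Qk' Q tau t') \<and> length (Qk' Q tau t') < 12 * tau)"

definition rk :: "'a list \<Rightarrow> 'a option list \<Rightarrow> 'a list \<Rightarrow> 'a option list" where
  "rk Q Q' S = (if contains S Q then
      (let p = (LEAST p. occ_at Q S p) in map Some (take p S) @ Q' @ map Some (drop (p + length Q) S))
    else [])"

end

theory Submission imports Defs begin

lemma occ_at_nth: "occ_at P S p \<longleftrightarrow> p + length P \<le> length S \<and> (\<forall>i<length P. S!(p+i) = P!i)"
proof
  assume h: "occ_at P S p"
  then have l: "p + length P \<le> length S" and e: "take (length P) (drop p S) = P" by (auto simp: occ_at_def)
  have "\<forall>i<length P. S!(p+i) = P!i"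
  proof (intro allI impI)
    fix i assume "i < length P"
    then have "take (length P) (drop p S) ! i = S!(p+i)" using l by simp
    then show "S!(p+i) = P!i" using e by simp
  qed
  with l show "p + length P \<le> length S \<and> (\<forall>i<length P. S!(p+i) = P!i)" by simp
next
  assume h: "p + length P \<le> length S \<and> (\<forall>i<length P. S!(p+i) = P!i)"
  then show "occ_at P S p" unfolding occ_at_def
    by (auto intro!: nth_equalityI)
qed

lemma occ_at_map: "occ_at (map f P) (map f S) p \<longleftrightarrow> occ_at P S p" if "inj f"
  using that by (auto simp: occ_at_nth inj_eq)

lemma period_mod:
  assumes "is_period Q d" "i < length Q"
  shows "Q!i = Q!(i mod d)"
  using assms(2)
proof (induction i rule: less_induct)
  case (less i)
  have d: "0 < d" using assms(1) by (simp add: is_period_def)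
  show ?case
  proof (cases "i < d")
    case True then show ?thesis by simp
  next
    case False
    then have "Q!(i-d) = Q!(i-d+d)" using assms(1) less.prems unfolding is_period_def by auto
    moreover have "Q!(i-d) = Q!((i-d) mod d)" using less.IH[of "i-d"] less.prems d False by auto
    moreover have "(i-d) mod d = i mod d" using False by (simp add: le_mod_geq)
    ultimately show ?thesis using False by simp
  qed
qed

lemma per_props:
  assumes "Q \<noteq> []"
  shows "is_period Q (per Q)" "\<And>d. is_period Q d \<Longrightarrow> per Q \<le> d"
proof -
  have "is_period Q (length Q)" using assms by (simp add: is_period_def)
  then show "is_period Q (per Q)" unfolding per_def by (rule LeastI)
  show "\<And>d. is_period Q d \<Longrightarrow> per Q \<le> d" unfolding per_def by (rule Least_le)
qed

lemma concat_rep_nth: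
  assumes "length r = k" "0 < k" "i < t * k"
  shows "concat (replicate t r) ! i = r ! (i mod k)"
  using assms(3)
proof (induction t arbitrary: i)
  case 0 then show ?case by simp
next
  case (Suc t)
  show ?case
  proof (cases "i < k")
    case True then show ?thesis using assms by (simp add: nth_append)
  next
    case False
    then have "concat (replicate (Suc t) r) ! i = concat (replicate t r) ! (i - k)"
      using assms by (simp add: nth_append)
    also have "\<dots> = r ! ((i-k) mod k)" using Suc False by auto
    also have "(i-k) mod k = i mod k" using False by (simp add: le_mod_geq)
    finally show ?thesis .
  qed
qed

lemma del_nth:
  assumes "c + n \<le> length X" "m \<le> n"
  shows "(take (c+m) X @ drop (c+n) X) ! i = (if i < c+m then X!i else X!(i + (n-m)))"
proof -
  have "c+m \<le> length X" using assms by simp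
  then show ?thesis using assms by (auto simp: nth_append min_def nth_drop intro!: arg_cong[where f="(!) X"])
qed

lemma del_len:
  assumes "c + n \<le> length X" "m \<le> n"
  shows "length (take (c+m) X @ drop (c+n) X) = length X - (n-m)"
  using assms by auto


locale perctx =
  fixes Q :: "'a list" and n m pi tau :: nat
  assumes n: "n = length Q" and pi: "0 < pi" and F1: "\<And>i. i < n \<Longrightarrow> Q!i = Q!(i mod pi)"
    and mn: "m \<le> n" and dv: "pi dvd (n - m)" and pit: "pi \<le> 4*tau" and mt: "8*tau \<le> m"
begin

lemma F2: "i + (n-m) < n \<Longrightarrow> Q!(i+(n-m)) = Q!i"
proof -
  assume h: "i + (n-m) < n"
  have "(i + (n-m)) mod pi = i mod pi" using dv by (simp add: mod_add_right_eq[symmetric])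
  then show ?thesis using F1[OF h] F1[of i] h by simp
qed

lemma G:
  assumes e: "e \<le> 4*tau" and h: "\<And>k. k + e < m \<Longrightarrow> Q!(k+e) = Q!k" and i: "i + e < n"
  shows "Q!(i+e) = Q!i"
proof -
  have r: "i mod pi < pi" using pi by simp
  have "(i+e) mod pi = (i mod pi + e) mod pi" by (simp add: mod_add_left_eq)
  have "Q!(i+e) = Q!((i+e) mod pi)" using F1 i by simp
  also have "\<dots> = Q!((i mod pi + e) mod pi)" by (simp add: mod_add_left_eq)
  also have "\<dots> = Q!(i mod pi + e)" using F1[of "i mod pi + e"] r e pit mt mn by simp
  also have "\<dots> = Q!(i mod pi)" using h[of "i mod pi"] r e pit mt by simp
  also have "\<dots> = Q!i" using F1[of i] i by simp
  finally show ?thesis .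
qed


lemma fwd:
  assumes P: "occ_at Q P a" and S: "occ_at Q S q" and qmin: "\<And>q'. occ_at Q S q' \<Longrightarrow> q \<le> q'"
    and Sl: "length S \<le> n + 4*tau" and occ: "occ_at P S p"
  shows "occ_at (take (a+m) P @ drop (a+n) P) (take (q+m) S @ drop (q+n) S) p"
proof -
  let ?D = "n-m"
  have Pl: "a+n \<le> length P" and Pq: "\<And>k. k<n \<Longrightarrow> P!(a+k) = Q!k" using P n by (auto simp: occ_at_nth)
  have Sl2: "q+n \<le> length S" and Sq: "\<And>k. k<n \<Longrightarrow> S!(q+k) = Q!k" using S n by (auto simp: occ_at_nth)
  have ol: "p + length P \<le> length S" and oe: "\<And>j. j<length P \<Longrightarrow> S!(p+j) = P!j" using occ by (auto simp: occ_at_nth)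
  have "occ_at Q S (p+a)" unfolding occ_at_nth using Pl ol Pq oe n by (auto simp: add.assoc)
  then have qa: "q \<le> p+a" by (rule qmin)
  have pa: "p+a \<le> 4*tau" using Pl ol Sl by simp
  show ?thesis unfolding occ_at_nth
  proof (intro conjI allI impI)
    show "p + length (take (a+m) P @ drop (a+n) P) \<le> length (take (q+m) S @ drop (q+n) S)"
      using del_len[OF Pl mn] del_len[OF Sl2 mn] ol Pl mn by (simp only:)
    fix i assume "i < length (take (a+m) P @ drop (a+n) P)"
    then have i: "i + ?D < length P" using del_len[OF Pl mn] Pl mn by simp
    have L: "(take (q+m) S @ drop (q+n) S) ! (p+i) = (if p+i < q+m then S!(p+i) else S!(p+i+?D))"
      using del_nth[OF Sl2 mn] by simp
    have R: "(take (a+m) P @ drop (a+n) P) ! i = (if i < a+m then P!i else P!(i+?D))"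
      using del_nth[OF Pl mn] by simp
    show "(take (q+m) S @ drop (q+n) S) ! (p+i) = (take (a+m) P @ drop (a+n) P) ! i"
    proof (cases "i < a+m")
      case True
      show ?thesis
      proof (cases "p+i < q+m")
        case True
        then show ?thesis using L R \<open>i < a+m\<close> oe[of i] i by simp
      next
        case False
        have "a \<le> i" using False qa pa mt by linarith
        then obtain k where k: "i = a + k" "k < m" using \<open>i < a+m\<close>
          by (metis add_less_cancel_left le_add_diff_inverse)
        have "S!(p+i+?D) = P!(i+?D)" using oe[of "i+?D"] i by (simp add: add.assoc)
        also have "\<dots> = Q!(k+?D)" using Pq[of "k+?D"] k mn by (simp add: add.assoc)
        also have "\<dots> = Q!k" using F2[of k] k mn by simp
        also have "\<dots> = P!i" using Pq[of k] k mn by simp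
        finally show ?thesis using L R False True by simp
      qed
    next
      case False
      then have "\<not> p+i < q+m" using qa by simp
      then show ?thesis using L R False oe[of "i+?D"] i by (simp add: add.assoc)
    qed
  qed
qed


lemma bwd:
  assumes P: "occ_at Q P a" and S: "occ_at Q S q"
    and Sl: "length S \<le> n + 4*tau"
    and occ: "occ_at (take (a+m) P @ drop (a+n) P) (take (q+m) S @ drop (q+n) S) p"
  shows "occ_at P S p"
proof -
  have "\<exists>D. n = m + D" using mn by presburger
  then obtain D where nD: "n = m + D" by blast
  have Dd: "n - m = D" using nD by simp
  have F2': "\<And>i. i + D < n \<Longrightarrow> Q!(i+D) = Q!i" using F2 Dd by simp
  have Pl: "a+n \<le> length P" and Pq: "\<And>k. k<n \<Longrightarrow> P!(a+k) = Q!k" using P n by (auto simp: occ_at_nth)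
  have Sl2: "q+n \<le> length S" and Sq: "\<And>k. k<n \<Longrightarrow> S!(q+k) = Q!k" using S n by (auto simp: occ_at_nth)
  have "\<exists>LP. length P = LP + D" using Pl nD by presburger
  then obtain LP where LP: "length P = LP + D" by blast
  have "\<exists>LS. length S = LS + D" using Sl2 nD by presburger
  then obtain LS where LS: "length S = LS + D" by blast
  have dlP: "length (take (a+m) P @ drop (a+n) P) = LP" using del_len[OF Pl mn] LP Dd by simp
  have dlS: "length (take (q+m) S @ drop (q+n) S) = LS" using del_len[OF Sl2 mn] LS Dd by simp
  have ol: "p + LP \<le> LS" using occ dlP dlS by (simp add: occ_at_nth)
  have E: "(if p+i < q+m then S!(p+i) else S!(p+i+D)) = (if i < a+m then P!i else P!(i+D))"
    if "i < LP" for i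
  proof -
    have "(take (q+m) S @ drop (q+n) S) ! (p+i) = (take (a+m) P @ drop (a+n) P) ! i"
      using occ dlP that by (simp add: occ_at_nth)
    then show ?thesis using del_nth[OF Sl2 mn] del_nth[OF Pl mn] unfolding Dd by simp
  qed
  have E1: "S!(p+i) = P!i" if "i < LP" "p+i < q+m" "i < a+m" for i using E[OF that(1)] that by simp
  have E2: "S!(p+i+D) = P!i" if "i < LP" "\<not> p+i < q+m" "i < a+m" for i using E[OF that(1)] that by simp
  have E3: "S!(p+i+D) = P!(i+D)" if "i < LP" "\<not> p+i < q+m" "\<not> i < a+m" for i using E[OF that(1)] that by simp
  have E4: "S!(p+i) = P!(i+D)" if "i < LP" "p+i < q+m" "\<not> i < a+m" for i using E[OF that(1)] that by simp
  have ol2: "p + length P \<le> length S" using ol LP LS by simp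
  have aLP: "a + m \<le> LP" using Pl LP nD by simp
  have pa: "p+a \<le> 4*tau" using ol aLP LS Sl nD by simp
  have q4: "q \<le> 4*tau" using Sl2 Sl by simp
  have main: "S!(p+j) = P!j" if j: "j < length P" for j
  proof (cases "q \<le> p+a")
    case True
    then have "\<exists>e. p+a = q+e" by presburger
    then obtain e where qe: "p+a = q+e" by blast
    have e4: "e \<le> 4*tau" using pa qe by simp
    have per: "Q!(i+e) = Q!i" if "i+e < n" for i
    proof (rule G[OF e4 _ that])
      fix k assume k: "k+e < m"
      have c1: "a+k < LP" "p+(a+k) < q+m" "a+k < a+m" using k aLP qe by simp_all
      have "S!(p+(a+k)) = P!(a+k)" using E1[OF c1] .
      moreover have "S!(p+(a+k)) = Q!(k+e)"
      proof -
        have ix: "p+(a+k) = q+(k+e)" using qe by simp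
        show ?thesis unfolding ix using Sq[of "k+e"] k nD by simp
      qed
      ultimately show "Q!(k+e) = Q!k" using Pq[of k] k nD by simp
    qed
    show ?thesis
    proof (cases "j < a")
      case True
      have "j < LP" "p+j < q+m" "j < a+m" using True aLP qe e4 mt by simp_all
      then show ?thesis by (rule E1)
    next
      case False
      then have "\<exists>k. j = a+k" by presburger
      then obtain k where k0: "j = a+k" by blast
      show ?thesis
      proof (cases "k < n")
        case True
        show ?thesis
        proof (cases "e+k < n")
          case True
          have ix: "p+j = q+(k+e)" using qe k0 by simp
          have "S!(p+j) = Q!(k+e)" unfolding ix using Sq[of "k+e"] True by (simp add: add.commute)
          then show ?thesis using per[of k] True Pq[of k] k0 \<open>k < n\<close> by (simp add: add.commute)
        next
          case False
          have "D \<le> k" using False e4 mt nD by simp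
          then have "\<exists>k'. k = k' + D" by presburger
          then obtain k' where k': "k = k' + D" by blast
          have c: "a+k' < LP" "\<not> p+(a+k') < q+m" "a+k' < a+m" using k' k0 False \<open>k < n\<close> aLP nD qe by simp_all
          have "S!(p+(a+k')+D) = P!(a+k')" using E2[OF c] .
          then have "S!(p+j) = Q!k'" using Pq[of k'] k' k0 \<open>k < n\<close> by (simp add: add.assoc)
          also have "\<dots> = Q!k" using F2'[of k'] k' \<open>k < n\<close> by simp
          finally show ?thesis using Pq[of k] k0 \<open>k < n\<close> by simp
        qed
      next
        case False
        then have "\<exists>k'. k = k' + D + m" using nD by presburger
        then obtain k' where k': "k = k' + D + m" by blast
        have c: "a+k'+m < LP" "\<not> p+(a+k'+m) < q+m" "\<not> a+k'+m < a+m" using k' k0 j LP qe by simp_all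
        have "S!(p+(a+k'+m)+D) = P!(a+k'+m+D)" using E3[OF c] .
        moreover have "p+(a+k'+m)+D = p+j" "a+k'+m+D = j" using k' k0 by simp_all
        ultimately show ?thesis by simp
      qed
    qed
  next
    case False
    then have "\<exists>e. q = p+a+e" by presburger
    then obtain e where qe: "q = p+a+e" by blast
    have e4: "e \<le> 4*tau" using q4 qe by simp
    have per: "Q!(i+e) = Q!i" if "i+e < n" for i
    proof (rule G[OF e4 _ that])
      fix k assume k: "k+e < m"
      have c: "a+e+k < LP" "p+(a+e+k) < q+m" "a+e+k < a+m" using k aLP qe by simp_all
      have "S!(p+(a+e+k)) = P!(a+e+k)" using E1[OF c] .
      moreover have "S!(p+(a+e+k)) = Q!k"
      proof -
        have ix: "p+(a+e+k) = q+k" using qe by simp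
        show ?thesis unfolding ix using Sq[of k] k nD by simp
      qed
      moreover have "P!(a+e+k) = Q!(k+e)"
      proof -
        have ix: "a+e+k = a+(k+e)" by simp
        show ?thesis unfolding ix using Pq[of "k+e"] k nD by simp
      qed
      ultimately show "Q!(k+e) = Q!k" by simp
    qed
    show ?thesis
    proof (cases "j < a+e")
      case True
      have "j < LP" "p+j < q+m" "j < a+m" using True aLP qe e4 mt by simp_all
      then show ?thesis by (rule E1)
    next
      case False
      then have "\<exists>k. j = a+e+k" by presburger
      then obtain k where k0: "j = a+e+k" by blast
      show ?thesis
      proof (cases "k + e < n")
        case True
        have ix: "p+j = q+k" "j = a+(k+e)" using qe k0 by simp_all
        have "S!(p+j) = Q!k" unfolding ix(1) using Sq[of k] True by simp
        also have "\<dots> = Q!(k+e)" using per[of k] True by simp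
        also have "\<dots> = P!j" unfolding ix(2) using Pq[of "k+e"] True by simp
        finally show ?thesis .
      next
        case False
        show ?thesis
        proof (cases "k < n")
          case True
          have "D \<le> k" using False e4 mt nD by simp
          then have "\<exists>k'. k = k' + D" by presburger
          then obtain k' where k': "k = k' + D" by blast
          have c: "a+e+k' < LP" "p+(a+e+k') < q+m" "\<not> a+e+k' < a+m" using k' k0 j LP qe True False nD by simp_all
          have "S!(p+(a+e+k')) = P!(a+e+k'+D)" using E4[OF c] .
          moreover have ix: "p+(a+e+k') = q+k'" "p+j = q+k" "a+e+k'+D = j" using qe k0 k' by simp_all
          moreover have "S!(q+k') = Q!k'" using Sq[of k'] k' True by simp
          moreover have "S!(q+k) = Q!k" using Sq[of k] True by simp
          moreover have "Q!k' = Q!k" using F2'[of k'] k' True by simp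
          ultimately show ?thesis by simp
        next
          case False
          then have "\<exists>k'. k = k' + D + m" using nD by presburger
          then obtain k' where k': "k = k' + D + m" by blast
          have c: "a+e+k'+m < LP" "\<not> p+(a+e+k'+m) < q+m" "\<not> a+e+k'+m < a+m" using k' k0 j LP qe by simp_all
          have "S!(p+(a+e+k'+m)+D) = P!(a+e+k'+m+D)" using E3[OF c] .
          moreover have "p+(a+e+k'+m)+D = p+j" "a+e+k'+m+D = j" using k' k0 by simp_all
          ultimately show ?thesis by simp
        qed
      qed
    qed
  qed
  show ?thesis unfolding occ_at_nth using ol2 main by auto
qed

end


lemma rep_len:
  assumes "c + n \<le> length X" "0 < n"
  shows "length (map Some (take c X) @ [None] @ map Some (drop (c+n) X)) = length X - n + 1"
  using assms by auto

lemma rep_nth: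
  assumes "c + n \<le> length X" "0 < n" "i < length X - n + 1"
  shows "(map Some (take c X) @ [None] @ map Some (drop (c+n) X)) ! i =
      (if i < c then Some (X!i) else if i = c then None else Some (X!(i+n-1)))"
proof -
  have "i - Suc c < length X - (c+n)" if "\<not> i < c" "i \<noteq> c" using assms that by linarith
  then show ?thesis using assms by (auto simp: nth_append nth_Cons' min_def nth_drop intro!: arg_cong[where f="(!) X"])
qed

lemma aper:
  fixes Q P S :: "'a list"
  assumes n: "n = length Q" "0 < n" and P: "occ_at Q P a" and S: "occ_at Q S q"
    and uq: "\<And>q'. occ_at Q S q' \<Longrightarrow> q' = q"
  shows "occ_at P S p \<longleftrightarrow> occ_at (map Some (take a P) @ [None] @ map Some (drop (a+n) P))
     (map Some (take q S) @ [None] @ map Some (drop (q+n) S)) p"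
proof -
  have Pl: "a+n \<le> length P" and Pq: "\<And>k. k<n \<Longrightarrow> P!(a+k) = Q!k" using P n by (auto simp: occ_at_nth)
  have Sl: "q+n \<le> length S" and Sq: "\<And>k. k<n \<Longrightarrow> S!(q+k) = Q!k" using S n by (auto simp: occ_at_nth)
  note LP = rep_len[OF Pl n(2)] and LS = rep_len[OF Sl n(2)]
  show ?thesis
  proof
    assume occ: "occ_at P S p"
    have ol: "p + length P \<le> length S" and oe: "\<And>j. j<length P \<Longrightarrow> S!(p+j) = P!j" using occ by (auto simp: occ_at_nth)
    have "occ_at Q S (p+a)" unfolding occ_at_nth using Pl ol Pq oe n by (auto simp: add.assoc)
    then have qa: "p + a = q" by (rule uq)
    show "occ_at (map Some (take a P) @ [None] @ map Some (drop (a+n) P))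
     (map Some (take q S) @ [None] @ map Some (drop (q+n) S)) p"
      unfolding occ_at_nth LP LS
    proof (intro conjI allI impI)
      show "p + (length P - n + 1) \<le> length S - n + 1" using ol Pl by linarith
      fix i assume i: "i < length P - n + 1"
      have i2: "p + i < length S - n + 1" using i ol Pl by linarith
      show "(map Some (take q S) @ [None] @ map Some (drop (q+n) S)) ! (p + i) = (map Some (take a P) @ [None] @ map Some (drop (a+n) P)) ! i"
      proof -
        have i3: "i+n-1 < length P" using i Pl n by linarith
        have "(if p+i < q then Some (S!(p+i)) else if p+i = q then None else Some (S!(p+i+n-1))) =
          (if i < a then Some (P!i) else if i = a then None else Some (P!(i+n-1)))"
        proof (cases "i < a")
          case True
          have "i < length P" using True Pl by linarith
          then show ?thesis using oe[of i] True qa by simp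
        next
          case False
          show ?thesis
          proof (cases "i = a")
            case True then show ?thesis using qa by simp
          next
            case False
            have c: "\<not> p+i < q" "p+i \<noteq> q" "\<not> i < a" "p+i+n-1 = p+(i+n-1)" using False \<open>\<not> i < a\<close> qa n by linarith+
            show ?thesis using oe[OF i3] c False by simp
          qed
        qed
        then show ?thesis unfolding rep_nth[OF Pl n(2) i] rep_nth[OF Sl n(2) i2] .
      qed
    qed
  next
    assume occ: "occ_at (map Some (take a P) @ [None] @ map Some (drop (a+n) P))
     (map Some (take q S) @ [None] @ map Some (drop (q+n) S)) p"
    then have ol: "p + (length P - n + 1) \<le> length S - n + 1"
      and oe0: "\<And>i. i < length P - n + 1 \<Longrightarrow> (map Some (take q S) @ [None] @ map Some (drop (q+n) S)) ! (p + i) = (map Some (take a P) @ [None] @ map Some (drop (a+n) P)) ! i"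
      unfolding occ_at_nth LP LS by auto
    have oe: "(if p+i < q then Some (S!(p+i)) else if p+i = q then None else Some (S!(p+i+n-1))) =
        (if i < a then Some (P!i) else if i = a then None else Some (P!(i+n-1)))" if i: "i < length P - n + 1" for i
    proof -
      have i2: "p + i < length S - n + 1" using i ol by linarith
      show ?thesis using oe0[OF i] unfolding rep_nth[OF Pl n(2) i] rep_nth[OF Sl n(2) i2] .
    qed
    have "a < length P - n + 1" using Pl by linarith
    from oe[OF this] have qa: "p + a = q" by (auto split: if_splits)
    show "occ_at P S p" unfolding occ_at_nth
    proof (intro conjI allI impI)
      show "p + length P \<le> length S" using ol Pl Sl by linarith
      fix j assume j: "j < length P"
      show "S!(p+j) = P!j"
      proof (cases "j < a")
        case True
        have c: "j < length P - n + 1" "p + j < q" using True qa Pl by linarith+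
        show ?thesis using oe[OF c(1)] c True by simp
      next
        case False
        show ?thesis
        proof (cases "j < a+n")
          case True
          have "p + j = q + (j-a)" using False qa by simp
          then show ?thesis using Sq[of "j-a"] Pq[of "j-a"] False True by simp
        next
          case False
          define i where "i = j - n + 1"
          have i: "i < length P - n + 1" "\<not> p + i < q" "p+i \<noteq> q" "\<not> i < a" "i \<noteq> a" "i+n-1 = j" "p+i+n-1 = p+j"
            using False j n qa unfolding i_def by linarith+
          have "Some (S!(p+i+n-1)) = Some (P!(i+n-1))" using oe[OF i(1)] i(2-5) by simp
          then show ?thesis unfolding i(6,7) by simp
        qed
      qed
    qed
  qed
qed


lemma occ_trans: "occ_at Q P a \<Longrightarrow> occ_at P S p \<Longrightarrow> occ_at Q S (p+a)"
  unfolding occ_at_nth by (auto simp: add.assoc)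

lemma Qpp:
  fixes Q :: "'a list"
  assumes ne: "Q \<noteq> []" and t: "t' \<le> length Q div per Q"
  shows "concat (replicate t' (rho Q)) @ take (length Q mod per Q) (rho Q)
     = take (t' * per Q + length Q mod per Q) Q"
proof -
  let ?n = "length Q" and ?pi = "per Q"
  have ip: "is_period Q ?pi" using per_props[OF ne] by simp
  then have pi0: "0 < ?pi" and pin: "?pi \<le> ?n" by (auto simp: is_period_def)
  have lr: "length (rho Q) = ?pi" using pin by (simp add: rho_def)
  have mle: "t' * ?pi + ?n mod ?pi \<le> ?n"
  proof -
    have "t' * ?pi \<le> (?n div ?pi) * ?pi" using t by simp
    then show ?thesis using div_mult_mod_eq[of ?n ?pi] by linarith
  qed
  have rmod: "?n mod ?pi < ?pi" using pi0 by simp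
  show ?thesis
  proof (rule nth_equalityI)
    show "length (concat (replicate t' (rho Q)) @ take (?n mod ?pi) (rho Q)) =
      length (take (t' * ?pi + ?n mod ?pi) Q)"
      using lr mle rmod by (simp add: length_concat sum_list_replicate min_def)
    fix i assume "i < length (concat (replicate t' (rho Q)) @ take (?n mod ?pi) (rho Q))"
    then have i: "i < t' * ?pi + ?n mod ?pi" using lr rmod by (simp add: length_concat sum_list_replicate)
    have lc: "length (concat (replicate t' (rho Q))) = t' * ?pi" using lr by (simp add: length_concat sum_list_replicate)
    show "(concat (replicate t' (rho Q)) @ take (?n mod ?pi) (rho Q)) ! i = take (t' * ?pi + ?n mod ?pi) Q ! i"
    proof (cases "i < t' * ?pi")
      case True
      then have "(concat (replicate t' (rho Q)) @ take (?n mod ?pi) (rho Q)) ! i = rho Q ! (i mod ?pi)"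
        using concat_rep_nth[OF lr pi0] lc by (simp add: nth_append)
      also have "\<dots> = Q ! (i mod ?pi)" using pi0 by (simp add: rho_def)
      also have "\<dots> = Q ! i" using period_mod[OF ip, of i] i mle by simp
      finally show ?thesis using i by simp
    next
      case False
      have im: "i - t' * ?pi = i mod ?pi"
      proof -
        have "i - t'*?pi < ?pi" using i False rmod by linarith
        moreover have "i = t'*?pi + (i - t'*?pi)" using False by simp
        ultimately show ?thesis by (metis mod_less mod_mult_self3 mult.commute)
      qed
      have "(concat (replicate t' (rho Q)) @ take (?n mod ?pi) (rho Q)) ! i = take (?n mod ?pi) (rho Q) ! (i - t'*?pi)"
        using False lc by (simp add: nth_append)
      also have "\<dots> = Q ! (i mod ?pi)" using im i False rmod by (simp add: rho_def)
      also have "\<dots> = Q ! i" using period_mod[OF ip, of i] i mle by simp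
      finally show ?thesis using i by simp
    qed
  qed
qed


lemma rk_expand:
  assumes "contains X Q"
  shows "occ_at Q X (LEAST p. occ_at Q X p)" "\<And>q'. occ_at Q X q' \<Longrightarrow> (LEAST p. occ_at Q X p) \<le> q'"
    "rk Q Q' X = map Some (take (LEAST p. occ_at Q X p) X) @ Q' @ map Some (drop ((LEAST p. occ_at Q X p) + length Q) X)"
proof -
  obtain p0 where "occ_at Q X p0" using assms unfolding contains_def by blast
  then show "occ_at Q X (LEAST p. occ_at Q X p)" by (rule LeastI)
  show "\<And>q'. occ_at Q X q' \<Longrightarrow> (LEAST p. occ_at Q X p) \<le> q'" by (rule Least_le)
  show "rk Q Q' X = map Some (take (LEAST p. occ_at Q X p) X) @ Q' @ map Some (drop ((LEAST p. occ_at Q X p) + length Q) X)"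
    using assms unfolding rk_def Let_def by simp
qed

lemma take_merge: "occ_at Q X c \<Longrightarrow> m \<le> length Q \<Longrightarrow> take c X @ take m Q = take (c+m) X"
proof -
  assume o: "occ_at Q X c" and m: "m \<le> length Q"
  have "take m Q = take m (take (length Q) (drop c X))" using o unfolding occ_at_def by simp
  also have "\<dots> = take m (drop c X)" using m by (simp add: min_def)
  finally show ?thesis by (simp add: take_add)
qed

theorem lemma6:
  fixes Sk P S :: "'a list" and tau l t' p :: nat
  assumes "tau \<ge> 1" and "l > 10 * tau" and "length Sk \<ge> l"
    and "valid_t' (Qk Sk tau l) tau t'"
    and "length S \<le> length (Qk Sk tau l) + 4 * tau"
    and "contains P (Qk Sk tau l)"
  shows "occ_at P S p \<longleftrightarrow>
    occ_at (rk (Qk Sk tau l) (Qk' (Qk Sk tau l) tau t') P) (rk (Qk Sk tau l) (Qk' (Qk Sk tau l) tau t') S) p"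
proof -
  define Q where "Q = Qk Sk tau l"
  define Q' where "Q' = Qk' Q tau t'"
  define n where "n = length Q"
  have n: "n = l - 2*tau" using assms(2,3) unfolding n_def Q_def Qk_def by simp
  have n8: "8*tau < n" using n assms(1,2) by linarith
  have ne: "Q \<noteq> []" using n8 n_def by auto
  define a where "a = (LEAST p. occ_at Q P p)"
  have Pa: "occ_at Q P a" and rkP: "rk Q Q' P = map Some (take a P) @ Q' @ map Some (drop (a + n) P)"
    using rk_expand[OF assms(6)[folded Q_def]] unfolding a_def n_def by auto
  have Sl: "length S \<le> n + 4*tau" using assms(5) unfolding Q_def n_def by simp
  have Q'ne: "Q' \<noteq> []"
  proof (cases "per Q > 4*tau")
    case True then show ?thesis unfolding Q'_def Qk'_def by simp
  next
    case False
    then have "8*tau \<le> length (Qk' Q tau t')" using assms(4) unfolding valid_t'_def Q_def by simp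
    then show ?thesis using assms(1) unfolding Q'_def by auto
  qed
  show ?thesis
  proof (cases "contains S Q")
    case False
    have "\<not> occ_at P S p" using occ_trans[OF Pa] False unfolding contains_def by blast
    moreover have "rk Q Q' S = []" using False unfolding rk_def by simp
    moreover have "\<not> occ_at (rk Q Q' P) [] p" using rkP Q'ne unfolding occ_at_def by simp
    ultimately show ?thesis unfolding Q_def[symmetric] Q'_def[symmetric] by simp
  next
    case True
    define q where "q = (LEAST p. occ_at Q S p)"
    have Sq: "occ_at Q S q" and qmin: "\<And>q'. occ_at Q S q' \<Longrightarrow> q \<le> q'"
      and rkS: "rk Q Q' S = map Some (take q S) @ Q' @ map Some (drop (q + n) S)"
      using rk_expand[OF True] unfolding q_def n_def by auto
    show ?thesis
    proof (cases "per Q > 4*tau")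
      case True
      have Q': "Q' = [None]" using True unfolding Q'_def Qk'_def by simp
      have uq: "q' = q" if "occ_at Q S q'" for q'
      proof (rule ccontr)
        assume "q' \<noteq> q"
        then have lt: "q < q'" using qmin[OF that] by simp
        define d where "d = q' - q"
        have l1: "q' + n \<le> length S" and e1: "\<And>k. k < n \<Longrightarrow> S!(q'+k) = Q!k"
          using that n_def by (auto simp: occ_at_nth)
        have e2: "\<And>k. k < n \<Longrightarrow> S!(q+k) = Q!k" using Sq n_def by (auto simp: occ_at_nth)
        have d4: "d \<le> 4*tau" using l1 Sl d_def by linarith
        have "is_period Q d" unfolding is_period_def
        proof (intro conjI allI impI)
          show "0 < d" using lt d_def by simp
          show "d \<le> length Q" using d4 n8 n_def by simp
          fix i assume "i + d < length Q"
          then have i1: "i < n" "i + d < n" using n_def by simp_all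
          have ix: "q' + i = q + (i+d)" using lt d_def by simp
          show "Q!i = Q!(i+d)" using e1[OF i1(1)] e2[OF i1(2)] unfolding ix by simp
        qed
        then have "per Q \<le> d" using per_props[OF ne] by simp
        then show False using True d4 by simp
      qed
      have "occ_at P S p \<longleftrightarrow> occ_at (rk Q Q' P) (rk Q Q' S) p"
        unfolding Q' rkP[unfolded Q'] rkS[unfolded Q'] using aper[OF n_def _ Pa Sq uq] n8 by simp
      then show ?thesis unfolding Q_def Q'_def .
    next
      case False
      define pi where "pi = per Q"
      define m where "m = t' * pi + n mod pi"
      have v: "valid_t' Q tau t'" using assms(4) unfolding Q_def .
      have v2: "t' \<le> length Q div per Q \<and> 8 * tau \<le> length (Qk' Q tau t')"
        using v False unfolding valid_t'_def by blast
      have tle: "t' \<le> n div pi" using v2 unfolding pi_def n_def by blast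
      have Q'e: "Q' = map Some (take m Q)"
        using False Qpp[OF ne, of t'] tle unfolding Q'_def Qk'_def m_def pi_def n_def by simp
      have tm: "t' * pi \<le> (n div pi) * pi" using tle by simp
      have mn: "m \<le> n" using tm div_mult_mod_eq[of n pi] unfolding m_def by linarith
      have ml: "length Q' = m" using mn Q'e n_def by simp
      have m8: "8*tau \<le> m" using v2 ml unfolding Q'_def by simp
      have ip: "is_period Q pi" using per_props[OF ne] pi_def by simp
      have pi0: "0 < pi" using ip by (simp add: is_period_def)
      have dv: "pi dvd (n - m)"
      proof -
        have "n - m = (n div pi) * pi - t' * pi" using div_mult_mod_eq[of n pi] unfolding m_def by linarith
        also have "\<dots> = (n div pi - t') * pi" by (simp add: diff_mult_distrib)
        finally show ?thesis by simp
      qed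
      have pit: "pi \<le> 4*tau" using False pi_def by simp
      have F1: "\<And>i. i < n \<Longrightarrow> Q!i = Q!(i mod pi)" using period_mod[OF ip] n_def by simp
      interpret perctx Q n m pi tau
        by (rule perctx.intro[OF n_def pi0 F1 mn dv pit m8])
      have mq: "m \<le> length Q" using mn n_def by simp
      have eP: "rk Q Q' P = map Some (take (a+m) P @ drop (a+n) P)"
      proof -
        have "rk Q Q' P = map Some ((take a P @ take m Q) @ drop (a+n) P)" using rkP Q'e by simp
        then show ?thesis unfolding take_merge[OF Pa mq] .
      qed
      have eS: "rk Q Q' S = map Some (take (q+m) S @ drop (q+n) S)"
      proof -
        have "rk Q Q' S = map Some ((take q S @ take m Q) @ drop (q+n) S)" using rkS Q'e by simp
        then show ?thesis unfolding take_merge[OF Sq mq] .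
      qed
      have "occ_at P S p \<longleftrightarrow> occ_at (take (a+m) P @ drop (a+n) P) (take (q+m) S @ drop (q+n) S) p"
        using fwd[OF Pa Sq qmin Sl] bwd[OF Pa Sq Sl] by blast
      then have "occ_at P S p \<longleftrightarrow> occ_at (rk Q Q' P) (rk Q Q' S) p"
        unfolding eP eS occ_at_map[of Some, OF inj_Some] .
      then show ?thesis unfolding Q_def Q'_def .
    qed
  qed
qed

end
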